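(* Let $\eta\ge2$, let $P\in\mathfrak N_\eta$, let $R$ be a retract of $P$ which is a tower of nice sections, and let $R(\ell)=\{x,y,z\}$ be a 3-element level set of $R$ with $\lambda(x)\le\lambda(y)\le\lambda(z)$. Then $\lambda(z)-\lambda(x)\le\eta-1$, and in case of equality $\lambda(x)<\lambda(y)<\lambda(z)$.
   Context: All posets are finite; $h_P$ is the height; level sets $P(0)=\min P$, $P(k+1)=\min(P\setminus\bigcup_{i\le k}P(i))$; $A<B$ means $a<b$ for all $a\in A,b\in B$. A retract of $P$ is the image of an idempotent order-preserving self-map; $R(\ell)$ denotes the level sets of $R$ itself, while $\lambda(x)$ denotes the index $k$ with $x\in P(k)$ (the level in $P$). A section is either a 2-element antichain or a poset $P$ of height $h_P\ge1$ with carrier $\{c_{k,j}:k\in[0,h_P],j\in\{0,1,2\}\}$ such that: $c_{0,j}<\dots<c_{h_P,j}$ for each $j$; each $\{c_{k,0},c_{k,1},c_{k,2}\}$ is an antichain; $c_{k,i}<c_{\ell,j}\Rightarrow c_{k,i+1}<c_{\ell,j+1}$ (indices mod 3); and for no $k$ is $P(k)<P(k+1)$ with both 3-element. A section is nice if for all $x<y$: $\{z:z>x\}\not\subseteq\{z:z\ge y\}$ and $\{z:z<y\}\not\subseteq\{z:z\le x\}$. A tower of nice sections is an ordinal sum of nice sections. The horizon of a nice section $P$ of height $\ge2$ is the smallest $\eta\in\mathbb N$ with $P(k)<P(k+\eta)$ for all $k\in[0,h_P-\eta]$; $\mathfrak N_\eta$ is the class of nice sections of height $\ge2$ with horizon $\eta$.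 *)

theory Defs
  imports Main
begin

text \<open>Subposets (e.g. retracts) carry the induced order,
  i.e. the same relation le restricted to a smaller carrier.\<close>

definition poset :: "'a set \<Rightarrow> ('a \<Rightarrow> 'a \<Rightarrow> bool) \<Rightarrow> bool" where
  "poset S le \<longleftrightarrow> finite S \<and> (\<forall>x\<in>S. le x x)
     \<and> (\<forall>x\<in>S. \<forall>y\<in>S. le x y \<and> le y x \<longrightarrow> x = y)
     \<and> (\<forall>x\<in>S. \<forall>y\<in>S. \<forall>z\<in>S. le x y \<and> le y z \<longrightarrow> le x z)"

definition less :: "('a \<Rightarrow> 'a \<Rightarrow> bool) \<Rightarrow> 'a \<Rightarrow> 'a \<Rightarrow> bool" where
  "less le x y \<longleftrightarrow> le x y \<and> x \<noteq> y"

definition minimals :: "'a set \<Rightarrow> ('a \<Rightarrow> 'a \<Rightarrow> bool) \<Rightarrow> 'a set" where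
  "minimals S le = {x \<in> S. \<not> (\<exists>y\<in>S. less le y x)}"

primrec rest :: "'a set \<Rightarrow> ('a \<Rightarrow> 'a \<Rightarrow> bool) \<Rightarrow> nat \<Rightarrow> 'a set" where
  "rest S le 0 = S"
| "rest S le (Suc k) = rest S le k - minimals (rest S le k) le"

text \<open>Level sets: P(0) = min P, P(k+1) = min (P minus the union of P(0..k)).\<close>
definition level :: "'a set \<Rightarrow> ('a \<Rightarrow> 'a \<Rightarrow> bool) \<Rightarrow> nat \<Rightarrow> 'a set" where
  "level S le k = minimals (rest S le k) le"

definition lam :: "'a set \<Rightarrow> ('a \<Rightarrow> 'a \<Rightarrow> bool) \<Rightarrow> 'a \<Rightarrow> nat" where
  "lam S le x = (THE k. x \<in> level S le k)"

definition is_chain :: "'a set \<Rightarrow> ('a \<Rightarrow> 'a \<Rightarrow> bool) \<Rightarrow> 'a set \<Rightarrow> bool" where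
  "is_chain S le C \<longleftrightarrow> C \<subseteq> S \<and> (\<forall>x\<in>C. \<forall>y\<in>C. le x y \<or> le y x)"

definition height :: "'a set \<Rightarrow> ('a \<Rightarrow> 'a \<Rightarrow> bool) \<Rightarrow> nat" where
  "height S le = Max {card C - 1 | C. is_chain S le C}"

definition antichain :: "'a set \<Rightarrow> ('a \<Rightarrow> 'a \<Rightarrow> bool) \<Rightarrow> bool" where
  "antichain A le \<longleftrightarrow> (\<forall>a\<in>A. \<forall>b\<in>A. le a b \<longrightarrow> a = b)"

definition setless :: "('a \<Rightarrow> 'a \<Rightarrow> bool) \<Rightarrow> 'a set \<Rightarrow> 'a set \<Rightarrow> bool" where
  "setless le A B \<longleftrightarrow> (\<forall>a\<in>A. \<forall>b\<in>B. less le a b)"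

definition is_section :: "'a set \<Rightarrow> ('a \<Rightarrow> 'a \<Rightarrow> bool) \<Rightarrow> bool" where
  "is_section S le \<longleftrightarrow> poset S le \<and>
    ((card S = 2 \<and> antichain S le) \<or>
     (height S le \<ge> 1 \<and>
      (\<exists>c :: nat \<Rightarrow> nat \<Rightarrow> 'a.
         inj_on (\<lambda>(k, j). c k j) ({..height S le} \<times> {..<3})
       \<and> S = (\<lambda>(k, j). c k j) ` ({..height S le} \<times> {..<3})
       \<and> (\<forall>j<3. \<forall>k<height S le. less le (c k j) (c (Suc k) j))
       \<and> (\<forall>k\<le>height S le. antichain {c k 0, c k 1, c k 2} le)
       \<and> (\<forall>k\<le>height S le. \<forall>l\<le>height S le. \<forall>i<3. \<forall>j<3.
            less le (c k i) (c l j) \<longrightarrow> less le (c k ((i + 1) mod 3)) (c l ((j + 1) mod 3))))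
      \<and> \<not> (\<exists>k. card (level S le k) = 3 \<and> card (level S le (k + 1)) = 3
               \<and> setless le (level S le k) (level S le (k + 1)))))"

definition nice :: "'a set \<Rightarrow> ('a \<Rightarrow> 'a \<Rightarrow> bool) \<Rightarrow> bool" where
  "nice S le \<longleftrightarrow> (\<forall>x\<in>S. \<forall>y\<in>S. less le x y \<longrightarrow>
      \<not> ({z \<in> S. less le x z} \<subseteq> {z \<in> S. le y z})
    \<and> \<not> ({z \<in> S. less le z y} \<subseteq> {z \<in> S. le z x}))"

definition nice_section :: "'a set \<Rightarrow> ('a \<Rightarrow> 'a \<Rightarrow> bool) \<Rightarrow> bool" where
  "nice_section S le \<longleftrightarrow> is_section S le \<and> nice S le"

text \<open>Tower of nice sections: ordinal sum B_0 + ... + B_m of nice sections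
  (with the induced orders), i.e. every element of B_i is below every element of B_j, i<j.\<close>
definition tower :: "'a set \<Rightarrow> ('a \<Rightarrow> 'a \<Rightarrow> bool) \<Rightarrow> bool" where
  "tower S le \<longleftrightarrow> (\<exists>Bs :: 'a set list. S = \<Union> (set Bs)
     \<and> (\<forall>i<length Bs. nice_section (Bs ! i) le)
     \<and> (\<forall>i<length Bs. \<forall>j<length Bs. i < j \<longrightarrow> setless le (Bs ! i) (Bs ! j)))"

definition horizon :: "'a set \<Rightarrow> ('a \<Rightarrow> 'a \<Rightarrow> bool) \<Rightarrow> nat" where
  "horizon S le = (LEAST eta. \<forall>k. k + eta \<le> height S le \<longrightarrow>
                      setless le (level S le k) (level S le (k + eta)))"

definition frakN :: "nat \<Rightarrow> 'a set \<Rightarrow> ('a \<Rightarrow> 'a \<Rightarrow> bool) \<Rightarrow> bool" where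
  "frakN eta S le \<longleftrightarrow> nice_section S le \<and> height S le \<ge> 2 \<and> horizon S le = eta"

definition retract :: "'a set \<Rightarrow> 'a set \<Rightarrow> ('a \<Rightarrow> 'a \<Rightarrow> bool) \<Rightarrow> bool" where
  "retract R S le \<longleftrightarrow> (\<exists>f. (\<forall>x\<in>S. f x \<in> S)
     \<and> (\<forall>x\<in>S. \<forall>y\<in>S. le x y \<longrightarrow> le (f x) (f y))
     \<and> (\<forall>x\<in>S. f (f x) = f x) \<and> R = f ` S)"

end

theory Submission
  imports Defs
begin


lemma rest_sub: "rest S le k \<subseteq> S" by (induct k) auto
lemma level_sub_rest: "level S le k \<subseteq> rest S le k" unfolding level_def minimals_def by auto
lemma level_sub: "level S le k \<subseteq> S" using rest_sub[of S le k] level_sub_rest[of S le k] by (rule order_trans[rotated])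
lemma level_min: "x \<in> level S le k \<Longrightarrow> y \<in> level S le k \<Longrightarrow> \<not> less le x y"
  unfolding level_def minimals_def by auto

lemma auto_minimals:
  assumes inj: "inj_on \<phi> S" and ord: "\<forall>x\<in>S. \<forall>y\<in>S. le (\<phi> x) (\<phi> y) = le x y" and T: "T \<subseteq> S"
  shows "\<phi> ` minimals T le = minimals (\<phi> ` T) le"
proof -
  have L: "less le (\<phi> a) (\<phi> b) = less le a b" if "a \<in> S" "b \<in> S" for a b
  proof -
    have "(\<phi> a = \<phi> b) = (a = b)" using inj that by (simp add: inj_on_eq_iff)
    moreover have "le (\<phi> a) (\<phi> b) = le a b" using ord that by simp
    ultimately show ?thesis unfolding less_def by simp
  qed
  show ?thesis
  proof
    show "\<phi> ` minimals T le \<subseteq> minimals (\<phi> ` T) le"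
    proof
      fix w assume "w \<in> \<phi> ` minimals T le"
      then obtain a where a: "w = \<phi> a" "a \<in> T" "\<forall>b\<in>T. \<not> less le b a" unfolding minimals_def by auto
      have "\<forall>v\<in>\<phi> ` T. \<not> less le v w"
      proof
        fix v assume "v \<in> \<phi> ` T"
        then obtain b where b: "v = \<phi> b" "b \<in> T" by blast
        have "less le v w = less le b a" using L[of b a] b a T by blast
        then show "\<not> less le v w" using a b by simp
      qed
      then show "w \<in> minimals (\<phi> ` T) le" using a unfolding minimals_def by auto
    qed
    show "minimals (\<phi> ` T) le \<subseteq> \<phi> ` minimals T le"
    proof
      fix w assume w: "w \<in> minimals (\<phi> ` T) le"
      then obtain a where a: "w = \<phi> a" "a \<in> T" unfolding minimals_def by auto
      have "\<forall>b\<in>T. \<not> less le b a"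
      proof (intro ballI notI)
        fix b assume "b \<in> T" "less le b a"
        then have "less le (\<phi> b) w" using a L[of b a] T by blast
        then show False using w \<open>b \<in> T\<close> unfolding minimals_def by auto
      qed
      then show "w \<in> \<phi> ` minimals T le" using a unfolding minimals_def by auto
    qed
  qed
qed

lemma auto_rest:
  assumes bij: "bij_betw \<phi> S S" and ord: "\<forall>x\<in>S. \<forall>y\<in>S. le (\<phi> x) (\<phi> y) = le x y"
  shows "\<phi> ` rest S le k = rest S le k"
proof (induct k)
  case 0 then show ?case using bij by (simp add: bij_betw_def)
next
  case (Suc k)
  have inj: "inj_on \<phi> S" using bij by (simp add: bij_betw_def)
  have M: "minimals (rest S le k) le \<subseteq> S" using rest_sub[of S le k] unfolding minimals_def by blast
  have "\<phi> ` rest S le (Suc k) = \<phi> ` rest S le k - \<phi> ` minimals (rest S le k) le"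
    using inj_on_image_set_diff[OF inj _ M, of "rest S le k"] rest_sub[of S le k] by auto
  also have "\<dots> = rest S le k - minimals (rest S le k) le"
    using auto_minimals[OF inj ord rest_sub] Suc by simp
  finally show ?case by simp
qed

lemma auto_level:
  assumes bij: "bij_betw \<phi> S S" and ord: "\<forall>x\<in>S. \<forall>y\<in>S. le (\<phi> x) (\<phi> y) = le x y"
    and "x \<in> level S le k"
  shows "\<phi> x \<in> level S le k"
proof -
  have inj: "inj_on \<phi> S" using bij by (simp add: bij_betw_def)
  have "\<phi> ` level S le k = level S le k"
    unfolding level_def using auto_minimals[OF inj ord rest_sub] auto_rest[OF bij ord] by simp
  then show ?thesis using assms(3) by blast
qed

lemma lt3: "(j::nat) < 3 \<longleftrightarrow> j = 0 \<or> j = 1 \<or> j = 2" by arith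
lemma mem_row: "(j::nat) < 3 \<Longrightarrow> f j \<in> {f 0, f 1, f 2}" unfolding lt3 by auto
lemma row3: "{f j | j. j < (3::nat)} = {f 0, f 1, f 2}" unfolding lt3 by auto

lemma poset_less_trans: "poset S le \<Longrightarrow> a \<in> S \<Longrightarrow> b \<in> S \<Longrightarrow> c \<in> S \<Longrightarrow> less le a b \<Longrightarrow> less le b c \<Longrightarrow> less le a c"
  unfolding poset_def less_def by metis
lemma poset_less_le_trans: "poset S le \<Longrightarrow> a \<in> S \<Longrightarrow> b \<in> S \<Longrightarrow> c \<in> S \<Longrightarrow> less le a b \<Longrightarrow> le b c \<Longrightarrow> less le a c"
  unfolding poset_def less_def by metis
lemma poset_le_less_trans: "poset S le \<Longrightarrow> a \<in> S \<Longrightarrow> b \<in> S \<Longrightarrow> c \<in> S \<Longrightarrow> le a b \<Longrightarrow> less le b c \<Longrightarrow> less le a c"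
  unfolding poset_def less_def by metis

definition secc :: "'a set \<Rightarrow> ('a \<Rightarrow> 'a \<Rightarrow> bool) \<Rightarrow> nat \<Rightarrow> (nat \<Rightarrow> nat \<Rightarrow> 'a) \<Rightarrow> bool" where
  "secc S le h c \<longleftrightarrow> poset S le
       \<and> inj_on (\<lambda>(k, j). c k j) ({..h} \<times> {..<3})
       \<and> S = (\<lambda>(k, j). c k j) ` ({..h} \<times> {..<3})
       \<and> (\<forall>j<3. \<forall>k<h. less le (c k j) (c (Suc k) j))
       \<and> (\<forall>k\<le>h. antichain {c k 0, c k 1, c k 2} le)
       \<and> (\<forall>k\<le>h. \<forall>l\<le>h. \<forall>i<3. \<forall>j<3.
            less le (c k i) (c l j) \<longrightarrow> less le (c k ((i + 1) mod 3)) (c l ((j + 1) mod 3)))"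

lemma secc_poset: "secc S le h c \<Longrightarrow> poset S le" unfolding secc_def by blast

lemma secc_mem: "secc S le h c \<Longrightarrow> k \<le> h \<Longrightarrow> j < 3 \<Longrightarrow> c k j \<in> S"
  unfolding secc_def by auto

lemma secc_inj: "secc S le h c \<Longrightarrow> k \<le> h \<Longrightarrow> j < 3 \<Longrightarrow> k' \<le> h \<Longrightarrow> j' < 3 \<Longrightarrow>
   c k j = c k' j' \<longleftrightarrow> k = k' \<and> j = j'"
  unfolding secc_def inj_on_def by auto

lemma secc_chain_less: assumes "secc S le h c" "k < l" "l \<le> h" "j < 3"
  shows "less le (c k j) (c l j)"
  using assms(2,3)
proof (induct l)
  case 0 then show ?case by simp
next
  case (Suc l)
  have ax: "less le (c l j) (c (Suc l) j)" using assms(1,4) Suc unfolding secc_def by auto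
  show ?case
  proof (cases "k = l")
    case True then show ?thesis using ax by simp
  next
    case False
    then show ?thesis using Suc ax poset_less_trans[of S le "c k j" "c l j" "c (Suc l) j"]
        secc_mem[OF assms(1)] assms(1,4) unfolding secc_def by auto
  qed
qed

lemma secc_chain_le: assumes "secc S le h c" "k \<le> l" "l \<le> h" "j < 3"
  shows "le (c k j) (c l j)"
proof (cases "k = l")
  case True then show ?thesis using assms secc_mem[OF assms(1)] unfolding secc_def poset_def by auto
next
  case False then show ?thesis using secc_chain_less[OF assms(1) _ assms(3,4), of k] assms(2)
    unfolding less_def by auto
qed

lemma secc_less_idx: assumes sc: "secc S le h c" "k \<le> h" "l \<le> h" "i < 3" "j < 3"
   and lt: "less le (c k i) (c l j)" shows "k < l"
proof (rule ccontr)
  assume "\<not> k < l" then have lk: "l \<le> k" by simp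
  have P: "poset S le" using sc(1) unfolding secc_def by blast
  have m: "c l i \<in> S" "c k i \<in> S" "c l j \<in> S" using secc_mem[OF sc(1)] sc by auto
  have "le (c l i) (c k i)" using secc_chain_le[OF sc(1) lk sc(2) sc(4)] .
  then have "less le (c l i) (c l j)" using poset_le_less_trans[OF P m(1,2,3)] lt by blast
  moreover have "antichain {c l 0, c l 1, c l 2} le" using sc unfolding secc_def by auto
  ultimately have "c l i = c l j" using mem_row[OF sc(4), of "c l"] mem_row[OF sc(5), of "c l"]
    unfolding antichain_def less_def by blast
  then show False using `less le (c l i) (c l j)` unfolding less_def by simp
qed

lemma secc_rest: assumes sc: "secc S le h c"
  shows "rest S le k = {c k' j | k' j. k \<le> k' \<and> k' \<le> h \<and> j < 3}"
proof (induct k)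
  case 0 then show ?case using sc unfolding secc_def by auto
next
  case (Suc k)
  define Rk where "Rk = {c k' j | k' j. k \<le> k' \<and> k' \<le> h \<and> j < 3}"
  have min: "minimals Rk le = {c k j | j. j < 3 \<and> k \<le> h}"
  proof
    show "minimals Rk le \<subseteq> {c k j | j. j < 3 \<and> k \<le> h}"
    proof
      fix w assume w: "w \<in> minimals Rk le"
      then obtain k' j where kj: "w = c k' j" "k \<le> k'" "k' \<le> h" "j < 3"
        unfolding minimals_def Rk_def by auto
      have "k' = k"
      proof (rule ccontr)
        assume "k' \<noteq> k"
        then have "less le (c k j) w" using secc_chain_less[OF sc _ kj(3,4), of k] kj by simp
        moreover have "k \<le> h" using kj by simp
        then have "c k j \<in> Rk" using kj unfolding Rk_def by blast
        ultimately show False using w unfolding minimals_def by auto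
      qed
      then show "w \<in> {c k j | j. j < 3 \<and> k \<le> h}" using kj by auto
    qed
  next
    show "{c k j | j. j < 3 \<and> k \<le> h} \<subseteq> minimals Rk le"
    proof
      fix w assume "w \<in> {c k j | j. j < 3 \<and> k \<le> h}"
      then obtain j where j: "w = c k j" "j < 3" "k \<le> h" by auto
      have "\<not> less le v w" if v: "v \<in> Rk" for v
      proof
        assume lt: "less le v w"
        obtain k' j' where kj: "v = c k' j'" "k \<le> k'" "k' \<le> h" "j' < 3"
          using v unfolding Rk_def by auto
        have "k' < k" using secc_less_idx[OF sc kj(3) j(3) kj(4) j(2)] lt kj j by simp
        then show False using kj by simp
      qed
      moreover have "w \<in> Rk" using j unfolding Rk_def by auto
      ultimately show "w \<in> minimals Rk le" unfolding minimals_def by auto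
    qed
  qed
  have "rest S le (Suc k) = Rk - {c k j | j. j < 3 \<and> k \<le> h}"
    using Suc min unfolding Rk_def by simp
  also have "\<dots> = {c k' j | k' j. Suc k \<le> k' \<and> k' \<le> h \<and> j < 3}"
  proof
    show "Rk - {c k j | j. j < 3 \<and> k \<le> h} \<subseteq> {c k' j | k' j. Suc k \<le> k' \<and> k' \<le> h \<and> j < 3}"
    proof
      fix w assume w: "w \<in> Rk - {c k j | j. j < 3 \<and> k \<le> h}"
      then obtain k' j where kj: "w = c k' j" "k \<le> k'" "k' \<le> h" "j < 3"
        unfolding Rk_def by blast
      have "k' \<noteq> k" using w kj by blast
      then have "Suc k \<le> k'" using kj by simp
      then show "w \<in> {c k' j | k' j. Suc k \<le> k' \<and> k' \<le> h \<and> j < 3}" using kj by blast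
    qed
    show "{c k' j | k' j. Suc k \<le> k' \<and> k' \<le> h \<and> j < 3} \<subseteq> Rk - {c k j | j. j < 3 \<and> k \<le> h}"
    proof
      fix w assume "w \<in> {c k' j | k' j. Suc k \<le> k' \<and> k' \<le> h \<and> j < 3}"
      then obtain k' j where kj: "w = c k' j" "Suc k \<le> k'" "k' \<le> h" "j < 3" by blast
      have "k \<le> k'" using kj by simp
      then have "w \<in> Rk" unfolding Rk_def using kj by blast
      moreover have "w \<notin> {c k j | j. j < 3 \<and> k \<le> h}"
      proof
        assume "w \<in> {c k j | j. j < 3 \<and> k \<le> h}"
        then obtain j' where "w = c k j'" "j' < 3" "k \<le> h" by blast
        then have "k' = k" using secc_inj[OF sc kj(3,4), of k j'] kj by simp
        then show False using kj by simp
      qed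
      ultimately show "w \<in> Rk - {c k j | j. j < 3 \<and> k \<le> h}" by blast
    qed
  qed
  finally show ?case .
qed

lemma secc_level_in: assumes sc: "secc S le h c" and "k \<le> h"
  shows "level S le k = {c k 0, c k 1, c k 2}"
proof -
  have "rest S le (Suc k) = rest S le k - level S le k" by (simp add: level_def)
  then have "level S le k = rest S le k - rest S le (Suc k)" using level_sub_rest[of S le k] by blast
  also have "\<dots> = {c k j | j. j < 3}"
  proof
    show "rest S le k - rest S le (Suc k) \<subseteq> {c k j | j. j < 3}"
    proof
      fix w assume w: "w \<in> rest S le k - rest S le (Suc k)"
      then obtain k' j where kj: "w = c k' j" "k \<le> k'" "k' \<le> h" "j < 3"
        unfolding secc_rest[OF sc] by blast
      have "k' = k"
      proof (rule ccontr)
        assume "k' \<noteq> k"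
        then have "Suc k \<le> k'" using kj by simp
        then have "w \<in> rest S le (Suc k)" unfolding secc_rest[OF sc] using kj by blast
        then show False using w by blast
      qed
      then show "w \<in> {c k j | j. j < 3}" using kj by blast
    qed
    show "{c k j | j. j < 3} \<subseteq> rest S le k - rest S le (Suc k)"
    proof
      fix w assume "w \<in> {c k j | j. j < 3}"
      then obtain j where j: "w = c k j" "j < 3" by blast
      have "w \<in> rest S le k" unfolding secc_rest[OF sc] using j assms(2) by blast
      moreover have "w \<notin> rest S le (Suc k)"
      proof
        assume "w \<in> rest S le (Suc k)"
        then obtain k' j' where kj: "w = c k' j'" "Suc k \<le> k'" "k' \<le> h" "j' < 3"
          unfolding secc_rest[OF sc] by blast
        then have "k = k'" using secc_inj[OF sc assms(2) j(2) kj(3) kj(4)] j by simp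
        then show False using kj by simp
      qed
      ultimately show "w \<in> rest S le k - rest S le (Suc k)" by blast
    qed
  qed
  also have "\<dots> = {c k 0, c k 1, c k 2}" by (rule row3)
  finally show ?thesis .
qed

lemma secc_level_out: assumes sc: "secc S le h c" and "h < k"
  shows "level S le k = {}"
  using level_sub_rest[of S le k] unfolding secc_rest[OF sc] using assms by auto

lemma secc_lam: assumes sc: "secc S le h c" and "k \<le> h" "j < 3"
  shows "lam S le (c k j) = k"
  unfolding lam_def
proof (rule the_equality)
  show "c k j \<in> level S le k" using secc_level_in[OF sc assms(2)] mem_row[OF assms(3), of "c k"]
    by simp
  fix k' assume k': "c k j \<in> level S le k'"
  have "k' \<le> h"
  proof (rule ccontr)
    assume "\<not> k' \<le> h" then show False using k' secc_level_out[OF sc, of k'] by simp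
  qed
  then show "k' = k" using k' secc_level_in[OF sc] secc_inj[OF sc _ _ \<open>k' \<le> h\<close>] assms by auto
qed

lemma secc_rot: assumes sc: "secc S le h c" and "k \<le> h" "l \<le> h" "i < 3" "j < 3"
  and "less le (c k i) (c l j)"
  shows "less le (c k ((i + d) mod 3)) (c l ((j + d) mod 3))"
proof (induct d)
  case 0 then show ?case using assms by simp
next
  case (Suc d)
  have "less le (c k (((i + d) mod 3 + 1) mod 3)) (c l (((j + d) mod 3 + 1) mod 3))"
    using sc Suc assms(2,3) unfolding secc_def by auto
  moreover have "((i + d) mod 3 + 1) mod 3 = (i + Suc d) mod 3" "((j + d) mod 3 + 1) mod 3 = (j + Suc d) mod 3"
    by presburger+
  ultimately show ?case by simp
qed


lemma section_cases: assumes "is_section S le" "\<not> (card S = 2 \<and> antichain S le)"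
  shows "\<exists>c. secc S le (height S le) c \<and> height S le \<ge> 1 \<and>
    \<not> (\<exists>k. card (level S le k) = 3 \<and> card (level S le (k + 1)) = 3
               \<and> setless le (level S le k) (level S le (k + 1)))"
  using assms unfolding is_section_def secc_def by blast

lemma height_card2: assumes "poset S le" "card S = 2" shows "height S le \<le> 1"
proof -
  have fin: "finite S" using assms(1) unfolding poset_def by simp
  let ?A = "{card C - 1 | C. is_chain S le C}"
  have "?A \<subseteq> (\<lambda>C. card C - 1) ` Pow S" unfolding is_chain_def by auto
  moreover have "finite ((\<lambda>C. card C - 1) ` Pow S)" using fin by simp
  ultimately have "finite ?A" by (rule finite_subset)
  moreover have "?A \<noteq> {}" unfolding is_chain_def by auto
  moreover have "\<forall>a\<in>?A. a \<le> 1"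
  proof
    fix a assume "a \<in> ?A"
    then obtain C where "a = card C - 1" "C \<subseteq> S" unfolding is_chain_def by auto
    then show "a \<le> 1" using card_mono[OF fin, of C] assms(2) by simp
  qed
  ultimately show ?thesis unfolding height_def by (simp add: Max_le_iff)
qed

lemma horizon_prop: assumes "horizon S le = eta"
  shows "\<forall>k. k + eta \<le> height S le \<longrightarrow> setless le (level S le k) (level S le (k + eta))"
proof -
  let ?Q = "\<lambda>eta. \<forall>k. k + eta \<le> height S le \<longrightarrow> setless le (level S le k) (level S le (k + eta))"
  have "?Q (Suc (height S le))" by simp
  then have "?Q (LEAST e. ?Q e)" by (rule LeastI)
  then show ?thesis using assms unfolding horizon_def by simp
qed

lemma P_far: assumes sc: "secc S le h c"
  and hz: "\<forall>k. k + eta \<le> h \<longrightarrow> setless le (level S le k) (level S le (k + eta))"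
  and u: "u \<in> S" and w: "w \<in> S" and lw: "lam S le u + eta \<le> lam S le w"
  shows "less le u w"
proof -
  obtain k i where ki: "u = c k i" "k \<le> h" "i < 3" using u sc unfolding secc_def by auto
  obtain l j where lj: "w = c l j" "l \<le> h" "j < 3" using w sc unfolding secc_def by auto
  have kl: "k + eta \<le> l" using lw secc_lam[OF sc] ki lj by simp
  have "setless le (level S le k) (level S le (k + eta))" using hz kl lj by simp
  moreover have "u \<in> level S le k" using secc_level_in[OF sc ki(2)] ki mem_row[OF ki(3), of "c k"]
    by simp
  moreover have "c (k + eta) j \<in> level S le (k + eta)" using secc_level_in[OF sc, of "k + eta"] kl lj
      mem_row[OF lj(3), of "c (k + eta)"] by simp
  ultimately have "less le u (c (k + eta) j)" unfolding setless_def by blast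
  moreover have "le (c (k + eta) j) w" using secc_chain_le[OF sc kl lj(2,3)] lj by simp
  moreover have "c (k + eta) j \<in> S" using secc_mem[OF sc, of "k + eta" j] kl lj by simp
  ultimately show ?thesis using poset_less_le_trans[OF secc_poset[OF sc] u _ w] by blast
qed

lemma P_mono: assumes sc: "secc S le h c" and u: "u \<in> S" and w: "w \<in> S" and lt: "less le u w"
  shows "lam S le u < lam S le w"
proof -
  obtain k i where ki: "u = c k i" "k \<le> h" "i < 3" using u sc unfolding secc_def by auto
  obtain l j where lj: "w = c l j" "l \<le> h" "j < 3" using w sc unfolding secc_def by auto
  show ?thesis using secc_less_idx[OF sc ki(2) lj(2) ki(3) lj(3)] lt ki lj secc_lam[OF sc] by simp
qed

lemma tower_rot:
  assumes PR: "poset R le" and RB: "R = \<Union> (set Bs)"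
    and ord: "\<forall>i<length Bs. \<forall>j<length Bs. i < j \<longrightarrow> setless le (Bs ! i) (Bs ! j)"
    and i: "i < length Bs" and sc: "secc (Bs ! i) le h c"
    and x: "c k j \<in> level R le l" and kj: "k \<le> h" "j < 3" and j': "j' < 3"
  shows "c k j' \<in> level R le l"
proof -
  define B where "B = Bs ! i"
  define C where "C = (\<lambda>(k::nat, j::nat). c k j)"
  define D where "D = {..h} \<times> {..<(3::nat)}"
  define g where "g = the_inv_into D C"
  define \<sigma> where "\<sigma> = (\<lambda>w. if w \<in> B then c (fst (g w)) ((snd (g w) + 1) mod 3) else w)"
  have sc': "secc B le h c" using sc B_def by simp
  have "inj_on C D \<and> B = C ` D" using sc' unfolding secc_def C_def D_def
    by (elim conjE) (intro conjI; assumption)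
  then have injC: "inj_on C D" and BCD: "B = C ` D" by auto
  have BR: "B \<subseteq> R" using RB i unfolding B_def by auto
  have sig: "\<sigma> (c a b) = c a ((b + 1) mod 3)" if "a \<le> h" "b < 3" for a b
  proof -
    have "(a, b) \<in> D" using that unfolding D_def by auto
    then have "g (c a b) = (a, b)" using the_inv_into_f_f[OF injC] unfolding g_def C_def by fastforce
    moreover have "c a b \<in> B" using secc_mem[OF sc' that] .
    ultimately show ?thesis unfolding \<sigma>_def by simp
  qed
  have Bform: "\<exists>a b. w = c a b \<and> a \<le> h \<and> b < 3" if "w \<in> B" for w
    using that BCD unfolding C_def D_def by auto
  have sigB: "\<sigma> w \<in> B" if "w \<in> B" for w
    using Bform[OF that] sig secc_mem[OF sc'] by fastforce
  have sigR: "\<sigma> w \<in> R" if "w \<in> R" for w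
    using that sigB BR unfolding \<sigma>_def by auto
  have sig3: "\<sigma> (\<sigma> (\<sigma> w)) = w" if "w \<in> R" for w
  proof (cases "w \<in> B")
    case True
    then obtain a b where ab: "w = c a b" "a \<le> h" "b < 3" using Bform by blast
    have "((((b + 1) mod 3) + 1) mod 3 + 1) mod 3 = b" using ab(3) unfolding lt3 by auto
    then show ?thesis using ab sig by simp
  next
    case False then show ?thesis unfolding \<sigma>_def by simp
  qed
  have other: "\<exists>t<length Bs. t \<noteq> i \<and> w \<in> Bs ! t" if wR: "w \<in> R" "w \<notin> B" for w
  proof -
    obtain X where "X \<in> set Bs" "w \<in> X" using wR RB by blast
    then obtain t where "t < length Bs" "Bs ! t = X" by (auto simp: in_set_conv_nth)
    then show ?thesis using wR \<open>w \<in> X\<close> unfolding B_def by blast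
  qed
  have cmp: "setless le B (Bs ! t) \<or> setless le (Bs ! t) B" if "t < length Bs" "t \<noteq> i" for t
  proof (cases "t < i")
    case True then show ?thesis using ord that i unfolding B_def by blast
  next
    case False then have "i < t" using that by simp
    then show ?thesis using ord that i unfolding B_def by blast
  qed
  have refl: "le w w" if "w \<in> R" for w using PR that unfolding poset_def by blast
  have antis: "a = b" if "a \<in> R" "b \<in> R" "le a b" "le b a" for a b
    using PR that unfolding poset_def by blast
  have mono: "le (\<sigma> a) (\<sigma> b)" if ab: "a \<in> R" "b \<in> R" "le a b" for a b
  proof (cases "a \<in> B")
    case aB: True
    show ?thesis
    proof (cases "b \<in> B")
      case bB: True
      show ?thesis
      proof (cases "a = b")
        case True then show ?thesis using refl sigR ab by simp
      next
        case False
        obtain a1 a2 where A: "a = c a1 a2" "a1 \<le> h" "a2 < 3" using Bform aB by blast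
        obtain b1 b2 where Bb: "b = c b1 b2" "b1 \<le> h" "b2 < 3" using Bform bB by blast
        have "less le a b" using False ab unfolding less_def by simp
        then have "less le (c a1 ((a2 + 1) mod 3)) (c b1 ((b2 + 1) mod 3))"
          using secc_rot[OF sc' A(2) Bb(2) A(3) Bb(3), of 1] A Bb by simp
        then show ?thesis using A Bb sig unfolding less_def by simp
      qed
    next
      case bB: False
      obtain t where t: "t < length Bs" "t \<noteq> i" "b \<in> Bs ! t" using other ab bB by blast
      show ?thesis
      proof (cases "setless le B (Bs ! t)")
        case True
        have "\<sigma> b = b" unfolding \<sigma>_def using bB by simp
        moreover have "less le (\<sigma> a) b" using True sigB[OF aB] t(3) unfolding setless_def by blast
        ultimately show ?thesis unfolding less_def by simp
      next
        case False
        then have "less le b a" using cmp[OF t(1,2)] t aB unfolding setless_def by blast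
        then show ?thesis using antis ab unfolding less_def by blast
      qed
    qed
  next
    case aB: False
    show ?thesis
    proof (cases "b \<in> B")
      case bB: True
      obtain t where t: "t < length Bs" "t \<noteq> i" "a \<in> Bs ! t" using other ab aB by blast
      show ?thesis
      proof (cases "setless le (Bs ! t) B")
        case True
        have "\<sigma> a = a" unfolding \<sigma>_def using aB by simp
        moreover have "less le a (\<sigma> b)" using True sigB[OF bB] t(3) unfolding setless_def by blast
        ultimately show ?thesis unfolding less_def by simp
      next
        case False
        then have "less le b a" using cmp[OF t(1,2)] t bB unfolding setless_def by blast
        then show ?thesis using antis ab unfolding less_def by blast
      qed
    next
      case bB: False
      then show ?thesis using aB ab unfolding \<sigma>_def by simp
    qed
  qed
  have ordeq: "\<forall>a\<in>R. \<forall>b\<in>R. le (\<sigma> a) (\<sigma> b) = le a b"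
  proof (intro ballI iffI)
    fix a b assume ab: "a \<in> R" "b \<in> R" "le (\<sigma> a) (\<sigma> b)"
    then have "le (\<sigma> (\<sigma> a)) (\<sigma> (\<sigma> b))" using mono[OF sigR[OF ab(1)] sigR[OF ab(2)] ab(3)] by simp
    then have "le (\<sigma> (\<sigma> (\<sigma> a))) (\<sigma> (\<sigma> (\<sigma> b)))"
      using mono[OF sigR[OF sigR[OF ab(1)]] sigR[OF sigR[OF ab(2)]]] by simp
    then show "le a b" using sig3 ab by simp
  next
    fix a b assume "a \<in> R" "b \<in> R" "le a b" then show "le (\<sigma> a) (\<sigma> b)" using mono by simp
  qed
  have bij: "bij_betw \<sigma> R R"
  proof (rule bij_betw_byWitness[where f' = "\<lambda>w. \<sigma> (\<sigma> w)"])
    show "\<forall>a\<in>R. \<sigma> (\<sigma> (\<sigma> a)) = a" using sig3 by blast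
    show "\<forall>a\<in>R. \<sigma> (\<sigma> (\<sigma> a)) = a" using sig3 by blast
    show "\<sigma> ` R \<subseteq> R" using sigR by blast
    show "(\<lambda>w. \<sigma> (\<sigma> w)) ` R \<subseteq> R" using sigR by blast
  qed
  have iter: "c k ((j + n) mod 3) \<in> level R le l" for n
  proof (induct n)
    case 0 then show ?case using x kj by simp
  next
    case (Suc n)
    have "\<sigma> (c k ((j + n) mod 3)) \<in> level R le l" using auto_level[OF bij ordeq Suc] .
    moreover have "((j + n) mod 3 + 1) mod 3 = (j + Suc n) mod 3" by (simp add: mod_Suc_eq)
    ultimately show ?case using sig[OF kj(1), of "(j + n) mod 3"] by simp
  qed
  have "(j + (j' + 3 - j) mod 3) mod 3 = j'" using kj(2) j' unfolding lt3 by auto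
  then show ?thesis using iter[of "(j' + 3 - j) mod 3"] by simp
qed



lemma rot3: "p < 3 \<Longrightarrow> q < 3 \<Longrightarrow> r < (3::nat) \<Longrightarrow> p \<noteq> q \<Longrightarrow> p \<noteq> r \<Longrightarrow> q \<noteq> r \<Longrightarrow>
  (p + (q + 3 - p) mod 3) mod 3 = q \<and> (q + (q + 3 - p) mod 3) mod 3 = r \<and> (r + (q + 3 - p) mod 3) mod 3 = p"
  unfolding lt3 by auto

lemma rotany: "i < 3 \<Longrightarrow> j1 < 3 \<Longrightarrow> j2 < (3::nat) \<Longrightarrow>
  (((j1 + 3 - (j2 + 3 - i) mod 3) mod 3) + (j2 + 3 - i) mod 3) mod 3 = j1 \<and> (i + (j2 + 3 - i) mod 3) mod 3 = j2"
  unfolding lt3 by auto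

lemma secc_card_row: assumes sc: "secc S le h c" "k \<le> h" shows "card {c k 0, c k 1, c k 2} = 3"
proof -
  have "c k 0 \<noteq> c k 1" "c k 0 \<noteq> c k 2" "c k 1 \<noteq> c k 2" using secc_inj[OF sc(1)] sc(2) by auto
  then show ?thesis by simp
qed

lemma full_up: assumes sc: "secc S le h c" and k: "k + 1 \<le> h" and i: "i < 3"
  and all: "\<forall>j<3. less le (c k j) (c (k + 1) i)"
  shows "\<exists>k. card (level S le k) = 3 \<and> card (level S le (k + 1)) = 3 \<and> setless le (level S le k) (level S le (k + 1))"
proof (intro exI conjI)
  have L: "level S le k = {c k j | j. j < 3}" "level S le (k + 1) = {c (k + 1) j | j. j < 3}"
  proof -
    have "level S le k = {c k 0, c k 1, c k 2}" "level S le (k + 1) = {c (k + 1) 0, c (k + 1) 1, c (k + 1) 2}"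
      using secc_level_in[OF sc] k by auto
    then show "level S le k = {c k j | j. j < 3}" "level S le (k + 1) = {c (k + 1) j | j. j < 3}"
      by (simp_all only: row3)
  qed
  show "card (level S le k) = 3" "card (level S le (k + 1)) = 3"
    using secc_level_in[OF sc] secc_card_row[OF sc] k by auto
  show "setless le (level S le k) (level S le (k + 1))"
    unfolding setless_def L
  proof (intro ballI)
    fix a b assume "a \<in> {c k j | j. j < 3}" "b \<in> {c (k + 1) j | j. j < 3}"
    then obtain j1 j2 where j: "a = c k j1" "j1 < 3" "b = c (k + 1) j2" "j2 < 3" by blast
    define d where "d = (j2 + 3 - i) mod 3"
    have "less le (c k ((j1 + 3 - d) mod 3)) (c (k + 1) i)" using all by simp
    then have "less le (c k (((j1 + 3 - d) mod 3 + d) mod 3)) (c (k + 1) ((i + d) mod 3))"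
      using secc_rot[OF sc _ k, of k "(j1 + 3 - d) mod 3" i d] k i by simp
    then show "less le a b" using rotany[OF i j(2) j(4)] j unfolding d_def by simp
  qed
qed

lemma full_down: assumes sc: "secc S le h c" and k: "k + 1 \<le> h" and i: "i < 3"
  and all: "\<forall>j<3. less le (c k i) (c (k + 1) j)"
  shows "\<exists>k. card (level S le k) = 3 \<and> card (level S le (k + 1)) = 3 \<and> setless le (level S le k) (level S le (k + 1))"
proof (intro exI conjI)
  have L: "level S le k = {c k j | j. j < 3}" "level S le (k + 1) = {c (k + 1) j | j. j < 3}"
  proof -
    have "level S le k = {c k 0, c k 1, c k 2}" "level S le (k + 1) = {c (k + 1) 0, c (k + 1) 1, c (k + 1) 2}"
      using secc_level_in[OF sc] k by auto
    then show "level S le k = {c k j | j. j < 3}" "level S le (k + 1) = {c (k + 1) j | j. j < 3}"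
      by (simp_all only: row3)
  qed
  show "card (level S le k) = 3" "card (level S le (k + 1)) = 3"
    using secc_level_in[OF sc] secc_card_row[OF sc] k by auto
  show "setless le (level S le k) (level S le (k + 1))"
    unfolding setless_def L
  proof (intro ballI)
    fix a b assume "a \<in> {c k j | j. j < 3}" "b \<in> {c (k + 1) j | j. j < 3}"
    then obtain j1 j2 where j: "a = c k j1" "j1 < 3" "b = c (k + 1) j2" "j2 < 3" by blast
    define d where "d = (j1 + 3 - i) mod 3"
    have "less le (c k i) (c (k + 1) ((j2 + 3 - d) mod 3))" using all by simp
    then have "less le (c k ((i + d) mod 3)) (c (k + 1) (((j2 + 3 - d) mod 3 + d) mod 3))"
      using secc_rot[OF sc _ k, of k i "(j2 + 3 - d) mod 3" d] k i by simp
    then show "less le a b" using rotany[OF i j(4) j(2)] j unfolding d_def by simp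
  qed
qed



theorem lemma3p6:
  fixes S R :: "'a set" and le :: "'a \<Rightarrow> 'a \<Rightarrow> bool" and eta l :: nat and x y z :: 'a
  assumes "eta \<ge> 2"
    and "frakN eta S le"
    and "retract R S le"
    and "tower R le"
    and "level R le l = {x, y, z}"
    and "card {x, y, z} = 3"
    and "lam S le x \<le> lam S le y" and "lam S le y \<le> lam S le z"
  shows "lam S le z - lam S le x \<le> eta - 1
         \<and> (lam S le z - lam S le x = eta - 1 \<longrightarrow> lam S le x < lam S le y \<and> lam S le y < lam S le z)"
proof -
  note eta2 = assms(1) and lev = assms(5) and lxy = assms(7) and lyz = assms(8)
  have secS: "is_section S le" and hS: "height S le \<ge> 2" and hor: "horizon S le = eta"
    using assms(2) unfolding frakN_def nice_section_def by auto
  have PS: "poset S le" using secS unfolding is_section_def by simp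
  have "\<not> (card S = 2 \<and> antichain S le)" using height_card2[OF PS] hS by auto
  then obtain c where scP: "secc S le (height S le) c"
    using section_cases[OF secS] by blast
  have hz: "\<forall>k. k + eta \<le> height S le \<longrightarrow> setless le (level S le k) (level S le (k + eta))"
    using horizon_prop[OF hor] .
  have far: "less le u w" if "u \<in> S" "w \<in> S" "lam S le u + eta \<le> lam S le w" for u w
    using P_far[OF scP hz that] .
  have mono: "lam S le u < lam S le w" if "u \<in> S" "w \<in> S" "less le u w" for u w
    using P_mono[OF scP that] .
  have RS: "R \<subseteq> S" using assms(3) unfolding retract_def by auto
  have PR: "poset R le" using PS RS unfolding poset_def by (meson finite_subset subsetD)
  obtain Bs where RB: "R = \<Union> (set Bs)" and nsB: "\<forall>i<length Bs. nice_section (Bs ! i) le"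
    and ordB: "\<forall>i<length Bs. \<forall>j<length Bs. i < j \<longrightarrow> setless le (Bs ! i) (Bs ! j)"
    using assms(4) unfolding tower_def by blast
  have dist: "x \<noteq> y" "x \<noteq> z" "y \<noteq> z" using assms(6) by (auto simp: card_insert_if split: if_splits)
  have inlev: "x \<in> level R le l" "y \<in> level R le l" "z \<in> level R le l" using lev by auto
  have inR: "x \<in> R" "y \<in> R" "z \<in> R" using inlev level_sub[of R le l] by auto
  have inS: "x \<in> S" "y \<in> S" "z \<in> S" using inR RS by auto
  have nl: "\<not> less le a b" if "a \<in> level R le l" "b \<in> level R le l" for a b
    using level_min[OF that] .
  show ?thesis
  proof
    show part1: "lam S le z - lam S le x \<le> eta - 1"
    proof (rule ccontr)
      assume "\<not> ?thesis"
      then have "lam S le x + eta \<le> lam S le z" using eta2 by simp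
      then have "less le x z" using far inS by blast
      then show False using nl inlev by blast
    qed
    show "lam S le z - lam S le x = eta - 1 \<longrightarrow> lam S le x < lam S le y \<and> lam S le y < lam S le z"
    proof (rule impI, rule ccontr)
      assume eq: "lam S le z - lam S le x = eta - 1"
        and neg: "\<not> (lam S le x < lam S le y \<and> lam S le y < lam S le z)"
      have eqz: "lam S le z = lam S le x + (eta - 1)" using eq lxy lyz by simp
      obtain i where i: "i < length Bs" "x \<in> Bs ! i" using inR RB by (auto simp: in_set_conv_nth)
      have sameblock: "w \<in> Bs ! i" if w: "w \<in> level R le l" for w
      proof -
        have "w \<in> R" using w level_sub[of R le l] by auto
        then obtain t where t: "t < length Bs" "w \<in> Bs ! t" using RB by (auto simp: in_set_conv_nth)
        show ?thesis
        proof (cases "t = i")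
          case True then show ?thesis using t by simp
        next
          case False
          then have "setless le (Bs ! i) (Bs ! t) \<or> setless le (Bs ! t) (Bs ! i)"
            using ordB t i by (metis linorder_neqE_nat)
          then have "less le x w \<or> less le w x" using t i unfolding setless_def by blast
          then show ?thesis using nl w inlev by blast
        qed
      qed
      define B where "B = Bs ! i"
      have xyzB: "x \<in> B" "y \<in> B" "z \<in> B"
        using sameblock[OF inlev(1)] sameblock[OF inlev(2)] sameblock[OF inlev(3)] unfolding B_def by simp_all
      have "nice_section B le" using nsB i unfolding B_def by simp
      then have secB: "is_section B le" unfolding nice_section_def by simp
      have PB: "poset B le" using secB unfolding is_section_def by simp
      have finB: "finite B" using PB unfolding poset_def by simp
      have "{x, y, z} \<subseteq> B" using xyzB by simp
      then have "card {x, y, z} \<le> card B" using card_mono[OF finB] by simp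
      then have "\<not> (card B = 2 \<and> antichain B le)" using assms(6) by auto
      then obtain cB where scB: "secc B le (height B le) cB" and hB1: "height B le \<ge> 1"
        and nofull: "\<not> (\<exists>k. card (level B le k) = 3 \<and> card (level B le (k + 1)) = 3
               \<and> setless le (level B le k) (level B le (k + 1)))"
        using section_cases[OF secB] by blast
      define hB where "hB = height B le"
      have scB': "secc (Bs ! i) le hB cB" using scB unfolding B_def hB_def .
      have form: "\<exists>k j. w = cB k j \<and> k \<le> hB \<and> j < 3" if "w \<in> B" for w
      proof -
        have "B = (\<lambda>(k, j). cB k j) ` ({..hB} \<times> {..<3})" using scB unfolding secc_def hB_def
          by (elim conjE)
        then show ?thesis using that by auto
      qed
      obtain kx jx where X: "x = cB kx jx" "kx \<le> hB" "jx < 3" using form xyzB by blast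
      obtain ky jy where Y: "y = cB ky jy" "ky \<le> hB" "jy < 3" using form xyzB by blast
      obtain kz jz where Z: "z = cB kz jz" "kz \<le> hB" "jz < 3" using form xyzB by blast
      have samerow: "k = k'" if a: "cB k j \<in> level R le l" "k \<le> hB" "j < 3"
        and b: "cB k' j' \<in> level R le l" "k' \<le> hB" "j' < 3" for k j k' j'
      proof (rule ccontr)
        assume "k \<noteq> k'"
        then show False
        proof (cases "k < k'")
          case True
          have "cB k j' \<in> level R le l" using tower_rot[OF PR RB ordB i(1) scB' a b(3)] .
          moreover have "less le (cB k j') (cB k' j')" using secc_chain_less[OF scB' True b(2,3)] .
          ultimately show False using nl b(1) by blast
        next
          case False
          then have "k' < k" using \<open>k \<noteq> k'\<close> by simp
          have "cB k' j \<in> level R le l" using tower_rot[OF PR RB ordB i(1) scB' b a(3)] .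
          moreover have "less le (cB k' j) (cB k j)" using secc_chain_less[OF scB' \<open>k' < k\<close> a(2,3)] .
          ultimately show False using nl a(1) by blast
        qed
      qed
      have kyx: "ky = kx" using samerow[of kx jx ky jy] X Y inlev by simp
      have kzx: "kz = kx" using samerow[of kx jx kz jz] X Z inlev by simp
      define m where "m = kx"
      have X': "x = cB m jx" and Y': "y = cB m jy" and Z': "z = cB m jz"
        using X Y Z kyx kzx unfolding m_def by auto
      have mh: "m \<le> hB" using X unfolding m_def by simp
      have jd: "jx \<noteq> jy" "jx \<noteq> jz" "jy \<noteq> jz" using dist X' Y' Z' by auto
      have allj: "j = jx \<or> j = jy \<or> j = jz" if "j < 3" for j
        using that X(3) Y(3) Z(3) jd unfolding lt3 by auto
      have allP: "\<forall>j<3. P j" if "P jx" "P jy" "P jz" for P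
      proof (intro allI impI)
        fix j :: nat assume "j < 3"
        then have "j = jx \<or> j = jy \<or> j = jz" by (rule allj)
        then show "P j" using that by auto
      qed
      have memS: "cB k j \<in> S" if "k \<le> hB" "j < 3" for k j
      proof -
        have "cB k j \<in> Bs ! i" using secc_mem[OF scB' that] .
        then have "cB k j \<in> R" using i RB by auto
        then show ?thesis using RS by blast
      qed
      have full: False if "k + 1 \<le> hB" "j < 3" "\<forall>j'<3. less le (cB k j') (cB (k + 1) j)" for k j
        using full_up[OF scB' that] nofull unfolding B_def by blast
      have full': False if "k + 1 \<le> hB" "j < 3" "\<forall>j'<3. less le (cB k j) (cB (k + 1) j')" for k j
        using full_down[OF scB' that] nofull unfolding B_def by blast
      have case_split: "lam S le x = lam S le y \<or> lam S le y = lam S le z" using neg lxy lyz by auto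
      show False
      proof (cases "m + 1 \<le> hB")
        case up: True
        show False
        proof (cases "lam S le x = lam S le y")
          case True
          define u where "u = cB (m + 1) jz"
          have uS: "u \<in> S" using memS up Z(3) unfolding u_def by simp
          have "less le z u" using secc_chain_less[OF scB', of m "m + 1" jz] up Z(3) Z' unfolding u_def by simp
          then have "lam S le z < lam S le u" using mono inS uS by blast
          then have "lam S le x + eta \<le> lam S le u" using eqz eta2 by simp
          then have "less le x u" "less le y u" using far inS uS True by auto
          moreover have "less le z u" by fact
          ultimately have "\<forall>j'<3. less le (cB m j') (cB (m + 1) jz)"
            using allP[of "\<lambda>j'. less le (cB m j') (cB (m + 1) jz)"] X' Y' Z' unfolding u_def by simp
          then show False using full[OF up Z(3)] by blast
        next
          case False
          then have yz: "lam S le y = lam S le z" using case_split by simp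
          define uy where "uy = cB (m + 1) jy"
          define uz where "uz = cB (m + 1) jz"
          have uS: "uy \<in> S" "uz \<in> S" using memS up Z(3) Y(3) unfolding uy_def uz_def by auto
          have "less le y uy" using secc_chain_less[OF scB', of m "m + 1" jy] up Y(3) Y' unfolding uy_def by simp
          then have "lam S le y < lam S le uy" using mono inS uS by blast
          then have "lam S le x + eta \<le> lam S le uy" using eqz eta2 yz by simp
          then have xuy: "less le x uy" using far inS uS by auto
          have "less le z uz" using secc_chain_less[OF scB', of m "m + 1" jz] up Z(3) Z' unfolding uz_def by simp
          then have "lam S le z < lam S le uz" using mono inS uS by blast
          then have "lam S le x + eta \<le> lam S le uz" using eqz eta2 by simp
          then have xuz: "less le x uz" using far inS uS by auto
          have r: "(jx + (jz + 3 - jx) mod 3) mod 3 = jz \<and> (jz + (jz + 3 - jx) mod 3) mod 3 = jy"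
            using rot3[of jx jz jy] X(3) Y(3) Z(3) jd by auto
          have "less le (cB m ((jx + (jz + 3 - jx) mod 3) mod 3)) (cB (m + 1) ((jz + (jz + 3 - jx) mod 3) mod 3))"
            using secc_rot[OF scB' mh up _ Z(3), of jx] X(3) xuz X' unfolding uz_def by simp
          then have zuy: "less le z uy" using r Z' unfolding uy_def by simp
          have "less le y uy" by fact
          then have "\<forall>j'<3. less le (cB m j') (cB (m + 1) jy)"
            using allP[of "\<lambda>j'. less le (cB m j') (cB (m + 1) jy)"] X' Y' Z' xuy zuy unfolding uy_def by simp
          then show False using full[OF up Y(3)] by blast
        qed
      next
        case down: False
        have "1 \<le> m" using down mh hB1 unfolding hB_def by simp
        then obtain m' where m': "m = m' + 1" by (metis le_add_diff_inverse2)
        have dm: "m' + 1 \<le> hB" using m' mh by simp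
        show False
        proof (cases "lam S le x = lam S le y")
          case True
          define vx where "vx = cB m' jx"
          define vy where "vy = cB m' jy"
          have vS: "vx \<in> S" "vy \<in> S" using memS dm X(3) Y(3) unfolding vx_def vy_def by auto
          have vxx: "less le vx x" using secc_chain_less[OF scB', of m' m jx] m' mh X(3) X' unfolding vx_def by simp
          have vyy: "less le vy y" using secc_chain_less[OF scB', of m' m jy] m' mh Y(3) Y' unfolding vy_def by simp
          have "lam S le vx < lam S le x" using mono inS vS vxx by blast
          then have "lam S le vx + eta \<le> lam S le z" using eqz eta2 by simp
          then have vxz: "less le vx z" using far inS vS by auto
          have "lam S le vy < lam S le y" using mono inS vS vyy by blast
          then have "lam S le vy + eta \<le> lam S le z" using eqz eta2 True by simp
          then have vyz: "less le vy z" using far inS vS by auto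
          have r: "(jy + (jx + 3 - jy) mod 3) mod 3 = jx \<and> (jz + (jx + 3 - jy) mod 3) mod 3 = jy"
            using rot3[of jy jx jz] X(3) Y(3) Z(3) jd by auto
          have "less le (cB m' ((jy + (jx + 3 - jy) mod 3) mod 3)) (cB (m' + 1) ((jz + (jx + 3 - jy) mod 3) mod 3))"
            using secc_rot[OF scB' _ dm Y(3) Z(3), of m'] vyz Z' m' dm unfolding vy_def by simp
          then have vxy: "less le vx y" using r Y' m' unfolding vx_def by simp
          have "\<forall>j'<3. less le (cB m' jx) (cB (m' + 1) j')"
            using allP[of "\<lambda>j'. less le (cB m' jx) (cB (m' + 1) j')"] X' Y' Z' vxx vxy vxz m'
            unfolding vx_def by simp
          then show False using full'[OF dm X(3)] by blast
        next
          case False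
          then have yz: "lam S le y = lam S le z" using case_split by simp
          define vx where "vx = cB m' jx"
          have vS: "vx \<in> S" using memS dm X(3) unfolding vx_def by auto
          have vxx: "less le vx x" using secc_chain_less[OF scB', of m' m jx] m' mh X(3) X' unfolding vx_def by simp
          have "lam S le vx < lam S le x" using mono inS vS vxx by blast
          then have "lam S le vx + eta \<le> lam S le z" "lam S le vx + eta \<le> lam S le y" using eqz eta2 yz by simp_all
          then have "less le vx z" "less le vx y" using far inS vS by auto
          then have "\<forall>j'<3. less le (cB m' jx) (cB (m' + 1) j')"
            using allP[of "\<lambda>j'. less le (cB m' jx) (cB (m' + 1) j')"] X' Y' Z' vxx m'
            unfolding vx_def by simp
          then show False using full'[OF dm X(3)] by blast
        qed
      qed
    qed
  qed
qed

end
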